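(* Let $\mathcal T$ be a $2$-deterministic $3$-automaton and let $x,y$ be infinite words such that the run $\gamma=q_0\xrightarrow{x,y|z}\cdots$ of $\mathcal T$ is accepting. If $y$ is normal, then there is a constant $K$ depending only on $\mathcal T$ such that for every factorization of $\gamma$ as a finite run $q_0\xrightarrow{u_1,v_1|w_1}q_1$ followed by an infinite run from $q_1$ with label $(x_1,y_1|z_1)$, with $|u_1|$ long enough, one has $|v_1|\le K|u_1|$.
   Context: A $3$-automaton is $\langle Q,A,\delta,I\rangle$ with finite state set $Q$, transitions $\delta\subseteq Q\times(A\cup\{\varepsilon\})^3\times Q$, initial states $I$. A run is a sequence of consecutive transitions; its label is the componentwise concatenation of transition labels; $p\xrightarrow{u_1,u_2|u_3}q$ denotes a finite run with label $(u_1,u_2,u_3)$. An infinite run is accepting if it starts in an initial state and all three label components are infinite. The automaton is $2$-deterministic if $I=\{q_0\}$ is a singleton and, for any two transitions from the same state with labels $(\alpha_1,\alpha_2,\alpha_3)$, $(\alpha'_1,\alpha'_2,\alpha'_3)$: $\alpha_j=\varepsilon$ for some $j\le2$ implies $\alpha'_j=\varepsilon$, and $\alpha_1=\alpha'_1,\alpha_2=\alpha'_2$ implies $\alpha_3=\alpha'_3$ and equal target states. It is assumed that no transition has both of its first two label components empty. An infinite word $y$ is normal if for every $\ell\ge1$ and $u\in A^\ell$, the number of occurrences of $u$ in $y[1..n]$ at positions $i\equiv1\bmod\ell$, divided by $n/\ell$, tends to $|A|^{-\ell}$. *)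

theory Defs
  imports Complex_Main
begin

text \<open>A transition (p, a1, a2, a3, q): source p, label components a1 a2 a3
  (None = empty word epsilon), target q.\<close>
type_synonym ('q, 'a) trans = "'q \<times> 'a option \<times> 'a option \<times> 'a option \<times> 'q"

fun src :: "('q, 'a) trans \<Rightarrow> 'q" where "src (p, a, b, c, q) = p"
fun tgt :: "('q, 'a) trans \<Rightarrow> 'q" where "tgt (p, a, b, c, q) = q"
fun lbl1 :: "('q, 'a) trans \<Rightarrow> 'a option" where "lbl1 (p, a, b, c, q) = a"
fun lbl2 :: "('q, 'a) trans \<Rightarrow> 'a option" where "lbl2 (p, a, b, c, q) = b"
fun lbl3 :: "('q, 'a) trans \<Rightarrow> 'a option" where "lbl3 (p, a, b, c, q) = c"

definition two_det_3aut :: "'q set \<Rightarrow> 'a set \<Rightarrow> ('q, 'a) trans set \<Rightarrow> 'q \<Rightarrow> bool" where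
  "two_det_3aut Q A delta q0 \<longleftrightarrow>
     finite Q \<and> finite A \<and> q0 \<in> Q \<and>
     (\<forall>t\<in>delta. src t \<in> Q \<and> tgt t \<in> Q \<and>
        set_option (lbl1 t) \<subseteq> A \<and> set_option (lbl2 t) \<subseteq> A \<and> set_option (lbl3 t) \<subseteq> A) \<and>
     (\<forall>t\<in>delta. \<not> (lbl1 t = None \<and> lbl2 t = None)) \<and>
     (\<forall>t\<in>delta. \<forall>t'\<in>delta. src t = src t' \<longrightarrow>
        (lbl1 t = None \<longrightarrow> lbl1 t' = None) \<and>
        (lbl2 t = None \<longrightarrow> lbl2 t' = None) \<and>
        (lbl1 t = lbl1 t' \<and> lbl2 t = lbl2 t' \<longrightarrow> lbl3 t = lbl3 t' \<and> tgt t = tgt t'))"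

definition prefix_label :: "(('q, 'a) trans \<Rightarrow> 'a option) \<Rightarrow> (nat \<Rightarrow> ('q, 'a) trans) \<Rightarrow> nat \<Rightarrow> 'a list" where
  "prefix_label cmp r n = concat (map (\<lambda>i. case cmp (r i) of None \<Rightarrow> [] | Some a \<Rightarrow> [a]) [0..<n])"

definition accepting_run :: "('q, 'a) trans set \<Rightarrow> 'q \<Rightarrow> (nat \<Rightarrow> ('q, 'a) trans) \<Rightarrow> bool" where
  "accepting_run delta q0 r \<longleftrightarrow>
     (\<forall>i. r i \<in> delta) \<and> src (r 0) = q0 \<and> (\<forall>i. tgt (r i) = src (r (Suc i))) \<and>
     infinite {i. lbl1 (r i) \<noteq> None} \<and> infinite {i. lbl2 (r i) \<noteq> None} \<and>
     infinite {i. lbl3 (r i) \<noteq> None}"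

definition run_label :: "(('q, 'a) trans \<Rightarrow> 'a option) \<Rightarrow> (nat \<Rightarrow> ('q, 'a) trans) \<Rightarrow> (nat \<Rightarrow> 'a) \<Rightarrow> bool" where
  "run_label cmp r w \<longleftrightarrow>
     (\<forall>n. \<forall>k < length (prefix_label cmp r n). w k = prefix_label cmp r n ! k)"

text \<open>Number of aligned occurrences of u (length l) in y[1..n]: positions i (0-indexed)
  with i mod l = 0 (i.e. 1-indexed position congruent to 1 mod l), fitting in the prefix.\<close>
definition aligned_occ :: "(nat \<Rightarrow> 'a) \<Rightarrow> 'a list \<Rightarrow> nat \<Rightarrow> nat" where
  "aligned_occ y u n = card {i. i + length u \<le> n \<and> i mod length u = 0 \<and>
                               map (\<lambda>k. y (i + k)) [0..<length u] = u}"

definition normal :: "'a set \<Rightarrow> (nat \<Rightarrow> 'a) \<Rightarrow> bool" where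
  "normal A y \<longleftrightarrow> (\<forall>l\<ge>1. \<forall>u. length u = l \<and> set u \<subseteq> A \<longrightarrow>
     ((\<lambda>n. real (aligned_occ y u n) / (real n / real l)) \<longlonglongrightarrow> 1 / real (card A) ^ l))"

end

theory Submission
  imports Defs
begin


definition yonly :: "('q,'a) trans set \<Rightarrow> 'q \<Rightarrow> bool" where
  "yonly d s \<longleftrightarrow> (\<exists>t\<in>d. src t = s \<and> lbl1 t = None)"
definition hasy :: "('q,'a) trans set \<Rightarrow> 'q \<Rightarrow> 'a \<Rightarrow> bool" where
  "hasy d s a \<longleftrightarrow> (\<exists>t\<in>d. src t = s \<and> lbl1 t = None \<and> lbl2 t = Some a)"
definition ystep :: "('q,'a) trans set \<Rightarrow> 'q \<Rightarrow> 'a \<Rightarrow> 'q" where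
  "ystep d s a = tgt (SOME t. t \<in> d \<and> src t = s \<and> lbl1 t = None \<and> lbl2 t = Some a)"
fun okp :: "('q,'a) trans set \<Rightarrow> 'q \<Rightarrow> 'a list \<Rightarrow> bool" where
  "okp d s [] = yonly d s"
| "okp d s (a#w) = (yonly d s \<and> hasy d s a \<and> okp d (ystep d s a) w)"
definition Esc :: "('q,'a) trans set \<Rightarrow> 'a set \<Rightarrow> 'q set" where
  "Esc d A = {s. yonly d s \<and> (\<exists>w. set w \<subseteq> A \<and> \<not> okp d s w)}"
fun stay :: "('q,'a) trans set \<Rightarrow> 'q set \<Rightarrow> 'q \<Rightarrow> 'a list \<Rightarrow> bool" where
  "stay d E s [] = (s \<in> E)"
| "stay d E s (a#w) = (s \<in> E \<and> hasy d s a \<and> stay d E (ystep d s a) w)"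
fun ysteps :: "('q,'a) trans set \<Rightarrow> 'q \<Rightarrow> 'a list \<Rightarrow> 'q" where
  "ysteps d s [] = s"
| "ysteps d s (a#w) = ysteps d (ystep d s a) w"
definition SW :: "('q,'a) trans set \<Rightarrow> 'q set \<Rightarrow> 'a set \<Rightarrow> nat \<Rightarrow> 'q \<Rightarrow> 'a list set" where
  "SW d E A j s = {w. length w = j \<and> set w \<subseteq> A \<and> stay d E s w}"

lemma stay_E: "stay d E s w \<Longrightarrow> s \<in> E"
  by (cases w) auto

lemma stay_append: "stay d E s (w1 @ w2) \<longleftrightarrow> stay d E s w1 \<and> stay d E (ysteps d s w1) w2"
  by (induction w1 arbitrary: s) (auto dest: stay_E)

lemma stay_ok: "E \<subseteq> Collect (yonly d) \<Longrightarrow> stay d E s w \<Longrightarrow> okp d s w"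
  by (induction w arbitrary: s) auto

lemma okp_yonly: "okp d s w \<Longrightarrow> yonly d s"
  by (cases w) auto

lemma okp_append: "okp d s (w @ v) \<Longrightarrow> okp d s w"
  by (induction w arbitrary: s) (auto dest: okp_yonly)

lemma SW_finite: "finite A \<Longrightarrow> finite (SW d E A j s)"
  unfolding SW_def
  by (rule finite_subset[OF _ finite_lists_length_eq[of A j]]) auto

lemma count_stay:
  assumes fin: "finite A"
    and wit: "\<forall>s\<in>E. \<exists>w. set w \<subseteq> A \<and> length w \<le> m \<and> \<not> okp d s w"
    and EY: "E \<subseteq> Collect (yonly d)" and sE: "s \<in> E"
  shows "card (SW d E A (k*m) s) \<le> (card A ^ m - 1)^k"
  using sE
proof (induction k arbitrary: s)
  case 0
  have "SW d E A (0*m) s \<subseteq> {[]}" unfolding SW_def by auto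
  then have "card (SW d E A (0*m) s) \<le> card {[]::'a list}"
    by (intro card_mono) auto
  then show ?case by simp
next
  case (Suc k)
  have one: "card (SW d E A m s) \<le> card A ^ m - 1"
  proof -
    obtain w where w: "set w \<subseteq> A" "length w \<le> m" "\<not> okp d s w" using wit Suc.prems by blast
    have "w \<noteq> []" using w(3) EY Suc.prems by auto
    then obtain a0 where a0: "a0 \<in> A" using w(1) by (cases w) auto
    define w0 where "w0 = w @ replicate (m - length w) a0"
    have w0: "w0 \<in> {xs. set xs \<subseteq> A \<and> length xs = m}" using w a0 unfolding w0_def by auto
    have "\<not> stay d E s w0"
    proof
      assume "stay d E s w0"
      then have "okp d s w0" using stay_ok[OF EY] by blast
      then have "okp d s w" unfolding w0_def by (rule okp_append)
      then show False using w(3) by simp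
    qed
    then have "SW d E A m s \<subseteq> {xs. set xs \<subseteq> A \<and> length xs = m} - {w0}"
      unfolding SW_def by auto
    then have "card (SW d E A m s) \<le> card ({xs. set xs \<subseteq> A \<and> length xs = m} - {w0})"
      by (intro card_mono) (auto intro: finite_lists_length_eq[OF fin])
    also have "\<dots> = card A ^ m - 1"
      using card_Diff_singleton[OF w0] card_lists_length_eq[OF fin] by simp
    finally show ?thesis .
  qed
  let ?S = "SIGMA w1: SW d E A m s. SW d E A (k*m) (ysteps d s w1)"
  have sub: "SW d E A (Suc k * m) s \<subseteq> (\<lambda>p. fst p @ snd p) ` ?S"
  proof
    fix w assume "w \<in> SW d E A (Suc k * m) s"
    then have w: "length w = m + k*m" "set w \<subseteq> A" "stay d E s w" unfolding SW_def by auto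
    have e: "w = take m w @ drop m w" by simp
    have "stay d E s (take m w) \<and> stay d E (ysteps d s (take m w)) (drop m w)"
      using w(3) stay_append[of d E s "take m w" "drop m w"] by simp
    then have "(take m w, drop m w) \<in> ?S" using w unfolding SW_def
      by (auto dest: in_set_takeD in_set_dropD)
    then show "w \<in> (\<lambda>p. fst p @ snd p) ` ?S"
      by (rule rev_image_eqI) simp
  qed
  have finS: "finite ?S" by (intro finite_SigmaI SW_finite[OF fin])
  have "card (SW d E A (Suc k * m) s) \<le> card ((\<lambda>p. fst p @ snd p) ` ?S)"
    by (intro card_mono finite_imageI finS sub)
  also have "\<dots> \<le> card ?S" by (rule card_image_le[OF finS])
  also have "\<dots> = (\<Sum>w1\<in>SW d E A m s. card (SW d E A (k*m) (ysteps d s w1)))"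
    by (intro card_SigmaI ballI SW_finite[OF fin])
  also have "\<dots> \<le> (\<Sum>w1\<in>SW d E A m s. (card A ^ m - 1)^k)"
  proof (rule sum_mono)
    fix w1 assume "w1 \<in> SW d E A m s"
    then have "stay d E s (w1 @ [])" unfolding SW_def by simp
    then have "ysteps d s w1 \<in> E" using stay_append[of d E s w1 "[]"] by simp
    then show "card (SW d E A (k*m) (ysteps d s w1)) \<le> (card A ^ m - 1)^k" by (rule Suc.IH)
  qed
  also have "\<dots> = card (SW d E A m s) * (card A ^ m - 1)^k" by simp
  also have "\<dots> \<le> (card A ^ m - 1) * (card A ^ m - 1)^k" using one by (rule mult_right_mono) simp
  finally show ?case by simp
qed



locale tda =
  fixes Q :: "'q set" and A :: "'a set" and delta :: "('q,'a) trans set" and q0 :: 'q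
  assumes td: "two_det_3aut Q A delta q0"
begin

lemma finQ: "finite Q" using td[unfolded two_det_3aut_def, THEN conjunct1] .
lemma finA: "finite A" using td[unfolded two_det_3aut_def, THEN conjunct2, THEN conjunct1] .

lemma wf_all: "\<forall>t\<in>delta. src t \<in> Q \<and> tgt t \<in> Q \<and>
        set_option (lbl1 t) \<subseteq> A \<and> set_option (lbl2 t) \<subseteq> A \<and> set_option (lbl3 t) \<subseteq> A"
  using td[unfolded two_det_3aut_def, THEN conjunct2, THEN conjunct2, THEN conjunct2, THEN conjunct1] .

lemma ne_all: "\<forall>t\<in>delta. \<not> (lbl1 t = None \<and> lbl2 t = None)"
  using td[unfolded two_det_3aut_def, THEN conjunct2, THEN conjunct2, THEN conjunct2, THEN conjunct2, THEN conjunct1] .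

lemma lab2A: "t \<in> delta \<Longrightarrow> lbl2 t = Some a \<Longrightarrow> a \<in> A"
  using wf_all by fastforce

lemma lab1A: "t \<in> delta \<Longrightarrow> lbl1 t = Some a \<Longrightarrow> a \<in> A"
  using wf_all by fastforce

lemma srcQ: "t \<in> delta \<Longrightarrow> src t \<in> Q"
  using wf_all by blast

lemma l1l2: "t \<in> delta \<Longrightarrow> lbl1 t = None \<Longrightarrow> lbl2 t \<noteq> None"
  using bspec[OF ne_all, of t] by simp

lemma det_all: "\<forall>t\<in>delta. \<forall>t'\<in>delta. src t = src t' \<longrightarrow>
        (lbl1 t = None \<longrightarrow> lbl1 t' = None) \<and>
        (lbl2 t = None \<longrightarrow> lbl2 t' = None) \<and>
        (lbl1 t = lbl1 t' \<and> lbl2 t = lbl2 t' \<longrightarrow> lbl3 t = lbl3 t' \<and> tgt t = tgt t')"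
  using td[unfolded two_det_3aut_def, THEN conjunct2, THEN conjunct2, THEN conjunct2, THEN conjunct2, THEN conjunct2] .

lemma det3: "t \<in> delta \<Longrightarrow> t' \<in> delta \<Longrightarrow> src t = src t' \<Longrightarrow> lbl1 t = lbl1 t' \<Longrightarrow> lbl2 t = lbl2 t' \<Longrightarrow> tgt t = tgt t'"
  using det_all by blast

lemma det1: "t \<in> delta \<Longrightarrow> t' \<in> delta \<Longrightarrow> src t = src t' \<Longrightarrow> lbl1 t = None \<Longrightarrow> lbl1 t' = None"
  using det_all by blast

lemma ystep_eq:
  assumes "t \<in> delta" "src t = s" "lbl1 t = None" "lbl2 t = Some a"
  shows "ystep delta s a = tgt t"
proof -
  let ?P = "\<lambda>t. t \<in> delta \<and> src t = s \<and> lbl1 t = None \<and> lbl2 t = Some a"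
  define t' where "t' = (SOME t. ?P t)"
  have P: "?P t'" unfolding t'_def using assms by (intro someI[of ?P t]) auto
  have "tgt t' = tgt t" using det3[of t' t] P assms by auto
  then show ?thesis unfolding ystep_def t'_def[symmetric] .
qed

lemma not_yonly: "t \<in> delta \<Longrightarrow> lbl1 t \<noteq> None \<Longrightarrow> \<not> yonly delta (src t)"
  unfolding yonly_def using det1 by metis

lemma EQ: "Esc delta A \<subseteq> Q"
  unfolding Esc_def yonly_def using srcQ by auto

lemma finE: "finite (Esc delta A)" using EQ finQ finite_subset by blast

lemma EY: "Esc delta A \<subseteq> Collect (yonly delta)" unfolding Esc_def by auto

end

lemma prefix_label_Suc:
  "prefix_label cmp r (Suc n) = prefix_label cmp r n @ (case cmp (r n) of None \<Rightarrow> [] | Some a \<Rightarrow> [a])"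
  unfolding prefix_label_def by simp

lemma len_prefix_Suc:
  "length (prefix_label cmp r (Suc n)) = length (prefix_label cmp r n) + (if cmp (r n) = None then 0 else 1)"
  unfolding prefix_label_Suc by (auto split: option.splits)

lemma len_prefix_card:
  "length (prefix_label cmp r n) = card {i. i < n \<and> cmp (r i) \<noteq> None}"
proof (induction n)
  case 0 then show ?case by (simp add: prefix_label_def)
next
  case (Suc n)
  have eq: "{i. i < Suc n \<and> cmp (r i) \<noteq> None} =
     {i. i < n \<and> cmp (r i) \<noteq> None} \<union> (if cmp (r n) = None then {} else {n})"
    by (auto simp: less_Suc_eq)
  show ?case unfolding len_prefix_Suc Suc eq by auto
qed

lemma len_prefix_mono: "i \<le> j \<Longrightarrow> length (prefix_label cmp r i) \<le> length (prefix_label cmp r j)"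
proof (induction j)
  case 0 then show ?case by simp
next
  case (Suc j) then show ?case using len_prefix_Suc[of cmp r j] by (auto simp: le_Suc_eq)
qed

locale arun = tda Q A delta q0 for Q :: "'q set" and A :: "'a set" and delta q0 +
  fixes r y
  assumes acc: "accepting_run delta q0 r" and rl: "run_label lbl2 r y"
begin

abbreviation "Yc n \<equiv> length (prefix_label lbl2 r n)"
abbreviation "Xc n \<equiv> length (prefix_label lbl1 r n)"

lemma rdelta: "r i \<in> delta" using acc unfolding accepting_run_def by auto
lemma rchain: "tgt (r i) = src (r (Suc i))" using acc unfolding accepting_run_def by auto

lemma y_letter: assumes "lbl2 (r i) = Some a" shows "y (Yc i) = a"
proof -
  have "prefix_label lbl2 r (Suc i) = prefix_label lbl2 r i @ [a]"
    using assms by (simp add: prefix_label_Suc)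
  moreover have "Yc i < length (prefix_label lbl2 r (Suc i))" using assms by (simp add: len_prefix_Suc)
  ultimately show ?thesis using rl unfolding run_label_def by (metis nth_append_length)
qed

lemma Y_reach: "p \<le> Yc n \<Longrightarrow> \<exists>t. Yc t = p"
proof (induction n)
  case 0 then show ?case by (auto simp: prefix_label_def)
next
  case (Suc n)
  show ?case
  proof (cases "p \<le> Yc n")
    case True then show ?thesis using Suc.IH by blast
  next
    case False
    then have "p = Yc (Suc n)" using Suc.prems len_prefix_Suc[of lbl2 r n] by (auto split: if_splits)
    then show ?thesis by blast
  qed
qed

lemma Y_run: "Yc t = p \<Longrightarrow> (\<forall>k'<k. lbl1 (r (t+k')) = None) \<Longrightarrow> Yc (t+k) = p + k"
proof (induction k)
  case 0 then show ?case by simp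
next
  case (Suc k)
  have "lbl2 (r (t+k)) \<noteq> None" using Suc.prems l1l2 rdelta by auto
  moreover have "Yc (t+k) = p + k" using Suc.IH Suc.prems by simp
  ultimately show ?case using len_prefix_Suc[of lbl2 r "t+k"] by simp
qed

lemma esc_word:
  "i + d = t' \<Longrightarrow> (\<forall>j. i \<le> j \<and> j < t' \<longrightarrow> lbl1 (r j) = None) \<Longrightarrow> lbl1 (r t') \<noteq> None \<Longrightarrow>
   \<not> okp delta (src (r i)) (map (\<lambda>j. the (lbl2 (r j))) [i..<t'])"
proof (induction d arbitrary: i)
  case 0
  then show ?case using not_yonly rdelta by auto
next
  case (Suc d)
  then have it: "i < t'" by auto
  have e: "[i..<t'] = i # [Suc i..<t']" using it upt_conv_Cons by blast
  have l1: "lbl1 (r i) = None" using Suc.prems it by auto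
  then obtain a where a: "lbl2 (r i) = Some a" using l1l2 rdelta by blast
  have st: "ystep delta (src (r i)) a = src (r (Suc i))"
    using ystep_eq[OF rdelta refl l1 a] rchain by simp
  have "\<not> okp delta (src (r (Suc i))) (map (\<lambda>j. the (lbl2 (r j))) [Suc i..<t'])"
    using Suc.prems by (intro Suc.IH) auto
  then show ?case unfolding e using a st by simp
qed

lemma escE: assumes "lbl1 (r i) = None" shows "src (r i) \<in> Esc delta A"
proof -
  have inf: "infinite {j. lbl1 (r j) \<noteq> None}" using acc unfolding accepting_run_def by (elim conjE) assumption
  have "\<exists>j. i \<le> j \<and> lbl1 (r j) \<noteq> None"
  proof (rule ccontr)
    assume "\<not> ?thesis"
    then have "{j. lbl1 (r j) \<noteq> None} \<subseteq> {..<i}" by (auto simp: not_le)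
    then show False using inf finite_subset by blast
  qed
  then obtain j where j: "i \<le> j" "lbl1 (r j) \<noteq> None" by blast
  define t' where "t' = (LEAST j. i \<le> j \<and> lbl1 (r j) \<noteq> None)"
  have t': "i \<le> t'" "lbl1 (r t') \<noteq> None" using LeastI[of "\<lambda>j. i \<le> j \<and> lbl1 (r j) \<noteq> None", OF conjI[OF j]]
    unfolding t'_def by auto
  have bt: "\<forall>j. i \<le> j \<and> j < t' \<longrightarrow> lbl1 (r j) = None"
    using not_less_Least[of _ "\<lambda>j. i \<le> j \<and> lbl1 (r j) \<noteq> None"] unfolding t'_def by blast
  have "\<not> okp delta (src (r i)) (map (\<lambda>j. the (lbl2 (r j))) [i..<t'])"
    using esc_word[of i "t' - i" t'] t' bt by auto
  moreover have "set (map (\<lambda>j. the (lbl2 (r j))) [i..<t']) \<subseteq> A"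
  proof
    fix a assume "a \<in> set (map (\<lambda>j. the (lbl2 (r j))) [i..<t'])"
    then obtain j where "i \<le> j" "j < t'" "a = the (lbl2 (r j))" by auto
    moreover then have "lbl2 (r j) \<noteq> None" using bt l1l2 rdelta by auto
    ultimately show "a \<in> A" using lab2A[OF rdelta[of j]] by (cases "lbl2 (r j)") auto
  qed
  moreover have "yonly delta (src (r i))" using assms rdelta unfolding yonly_def by blast
  ultimately show ?thesis unfolding Esc_def by blast
qed

end



context tda begin

lemma choose_MB:
  assumes Ane: "A \<noteq> {}"
  shows "\<exists>M B. M \<ge> 1 \<and> finite B \<and> (\<forall>u\<in>B. length u = M \<and> set u \<subseteq> A) \<and>
     real (card B) / real (card A) ^ M < 1/2 \<and>
     (\<forall>s\<in>Esc delta A. \<forall>w. length w = M \<and> set w \<subseteq> A \<and> stay delta (Esc delta A) s w \<longrightarrow> w \<in> B)"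
proof -
  define E where "E = Esc delta A"
  define ws where "ws s = (SOME w. set w \<subseteq> A \<and> \<not> okp delta s w)" for s
  define m where "m = Max (insert 1 ((\<lambda>s. length (ws s)) ` E))"
  have finI: "finite (insert 1 ((\<lambda>s. length (ws s)) ` E))" using finE unfolding E_def by simp
  have m1: "m \<ge> 1" unfolding m_def using finI by (intro Max_ge) auto
  have wit: "\<forall>s\<in>E. \<exists>w. set w \<subseteq> A \<and> length w \<le> m \<and> \<not> okp delta s w"
  proof
    fix s assume s: "s \<in> E"
    then have ex: "\<exists>w. set w \<subseteq> A \<and> \<not> okp delta s w" unfolding E_def Esc_def by blast
    have "set (ws s) \<subseteq> A \<and> \<not> okp delta s (ws s)" unfolding ws_def by (rule someI_ex[OF ex])
    moreover have "length (ws s) \<le> m" unfolding m_def using finI s by (intro Max_ge) auto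
    ultimately show "\<exists>w. set w \<subseteq> A \<and> length w \<le> m \<and> \<not> okp delta s w" by blast
  qed
  have cA: "card A \<ge> 1" using Ane finA by (simp add: Suc_le_eq card_gt_0_iff)
  define P where "P = card A ^ m"
  have P1: "P \<ge> 1" unfolding P_def using cA by simp
  define q where "q = real (P - 1) / real P"
  have q0: "0 \<le> q" unfolding q_def by simp
  have q1: "q < 1" unfolding q_def using P1 by (simp add: of_nat_diff)
  have "(\<lambda>k. q ^ k) \<longlonglongrightarrow> 0" using q0 q1 by (intro LIMSEQ_power_zero) simp
  then have "(\<lambda>k. real (card Q) * q ^ k) \<longlonglongrightarrow> real (card Q) * 0" by (intro tendsto_mult tendsto_const)
  then have "eventually (\<lambda>k. real (card Q) * q ^ k < 1/2) sequentially"
    by (intro order_tendstoD(2)) auto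
  then obtain k0 where k0: "\<And>k. k \<ge> k0 \<Longrightarrow> real (card Q) * q ^ k < 1/2"
    unfolding eventually_sequentially by blast
  define k where "k = Suc k0"
  define M where "M = k * m"
  define B where "B = (\<Union>s\<in>E. SW delta E A M s)"
  have M1: "M \<ge> 1" unfolding M_def k_def using m1 by simp
  have finB: "finite B" unfolding B_def using finE finA by (auto simp: E_def intro: SW_finite)
  have Bprop: "\<forall>u\<in>B. length u = M \<and> set u \<subseteq> A" unfolding B_def SW_def by auto
  have "card B \<le> (\<Sum>s\<in>E. card (SW delta E A M s))" unfolding B_def
    using finE by (intro card_UN_le) (simp add: E_def)
  also have "\<dots> \<le> (\<Sum>s\<in>E. (P - 1) ^ k)"
    unfolding M_def P_def
    by (intro sum_mono count_stay[OF finA wit]) (auto simp: E_def EY)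
  also have "\<dots> = card E * (P - 1) ^ k" by simp
  also have "\<dots> \<le> card Q * (P - 1) ^ k" using EQ finQ unfolding E_def
    by (intro mult_right_mono card_mono) auto
  finally have cB: "card B \<le> card Q * (P - 1) ^ k" .
  have AM: "real (card A) ^ M = real P ^ k" unfolding M_def P_def
    by (simp add: power_mult[symmetric] mult.commute of_nat_power)
  have Ppos: "real P > 0" using P1 by simp
  have "real (card B) / real (card A) ^ M \<le> real (card Q * (P - 1) ^ k) / real P ^ k"
    unfolding AM using cB Ppos by (intro divide_right_mono) (auto simp del: of_nat_mult)
  also have "\<dots> = real (card Q) * q ^ k" unfolding q_def by (simp add: power_divide)
  also have "\<dots> < 1/2" using k0[of k] unfolding k_def by simp
  finally have lt: "real (card B) / real (card A) ^ M < 1/2" .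
  have "\<forall>s\<in>Esc delta A. \<forall>w. length w = M \<and> set w \<subseteq> A \<and> stay delta (Esc delta A) s w \<longrightarrow> w \<in> B"
    unfolding B_def SW_def E_def by blast
  then show ?thesis using M1 finB Bprop lt by blast
qed

end



context arun begin

definition tt :: "nat \<Rightarrow> nat \<Rightarrow> nat" where "tt M j = (SOME t. Yc t = j * M)"

lemma tt_prop: "j * M \<le> Yc N \<Longrightarrow> Yc (tt M j) = j * M"
  unfolding tt_def by (rule someI_ex) (rule Y_reach)

lemma Y_mono: "i \<le> j \<Longrightarrow> Yc i \<le> Yc j" by (rule len_prefix_mono)

lemma clean_word:
  assumes Yt: "Yc t = p" and cl: "\<forall>k\<le>M. lbl1 (r (t+k)) = None"
  shows "stay delta (Esc delta A) (src (r t)) (map (\<lambda>i. y (p+i)) [0..<M]) \<and>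
         set (map (\<lambda>i. y (p+i)) [0..<M]) \<subseteq> A"
proof -
  have lab: "lbl2 (r (t+k)) = Some (y (p+k))" if kM: "k \<le> M" for k
  proof -
    have "Yc (t+k) = p + k" using Y_run[OF Yt, of k] cl kM by auto
    moreover have "lbl2 (r (t+k)) \<noteq> None" using l1l2[OF rdelta] cl kM by blast
    then obtain a where a: "lbl2 (r (t+k)) = Some a" by blast
    ultimately show ?thesis using y_letter[OF a] by simp
  qed
  have st: "stay delta (Esc delta A) (src (r (t + (M-d)))) (map (\<lambda>i. y (p+i)) [M-d..<M])"
    if "d \<le> M" for d
    using that
  proof (induction d)
    case 0
    then show ?case using escE cl by simp
  next
    case (Suc d)
    define k where "k = M - Suc d"
    have kM: "k < M" and kd: "Suc k = M - d" using Suc.prems unfolding k_def by auto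
    have e: "[k..<M] = k # [M-d..<M]" using kM kd upt_conv_Cons by simp
    have l1: "lbl1 (r (t+k)) = None" using cl kM by simp
    have l2: "lbl2 (r (t+k)) = Some (y (p+k))" using lab kM by simp
    have ys: "ystep delta (src (r (t+k))) (y (p+k)) = src (r (t + (M-d)))"
    proof -
      have "t + (M-d) = Suc (t+k)" using kd by simp
      then show ?thesis using ystep_eq[OF rdelta refl l1 l2] rchain[of "t+k"] by simp
    qed
    have "hasy delta (src (r (t+k))) (y (p+k))" unfolding hasy_def using rdelta l1 l2 by blast
    moreover have "src (r (t+k)) \<in> Esc delta A" using escE[OF l1] .
    moreover have "stay delta (Esc delta A) (src (r (t + (M-d)))) (map (\<lambda>i. y (p+i)) [M-d..<M])"
      using Suc by simp
    ultimately show ?case unfolding k_def[symmetric] e using ys by simp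
  qed
  have "set (map (\<lambda>i. y (p+i)) [0..<M]) \<subseteq> A"
  proof
    fix a assume "a \<in> set (map (\<lambda>i. y (p+i)) [0..<M])"
    then obtain i where "i < M" "a = y (p+i)" by auto
    then show "a \<in> A" using lab[of i] lab2A[OF rdelta] by auto
  qed
  then show ?thesis using st[of M] by simp
qed

end



context arun begin

lemma clean_count:
  assumes M1: "M \<ge> 1" and finB: "finite B" and Bprop: "\<forall>u\<in>B. length u = M \<and> set u \<subseteq> A"
    and Bst: "\<forall>s\<in>Esc delta A. \<forall>w. length w = M \<and> set w \<subseteq> A \<and> stay delta (Esc delta A) s w \<longrightarrow> w \<in> B"
  shows "card {j. j < (Yc N - 1) div M \<and> (\<forall>k\<le>M. lbl1 (r (tt M j + k)) = None)}
         \<le> (\<Sum>u\<in>B. aligned_occ y u (Yc N))"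
proof -
  define n where "n = Yc N"
  let ?C = "{j. j < (n - 1) div M \<and> (\<forall>k\<le>M. lbl1 (r (tt M j + k)) = None)}"
  let ?U = "\<Union>u\<in>B. {i. i + M \<le> n \<and> i mod M = 0 \<and> map (\<lambda>k. y (i+k)) [0..<M] = u}"
  have Mpos: "M > 0" using M1 by simp
  have inj: "inj_on (\<lambda>j. j*M) ?C" using Mpos by (auto intro: inj_onI)
  have sub: "(\<lambda>j. j*M) ` ?C \<subseteq> ?U"
  proof
    fix i assume "i \<in> (\<lambda>j. j*M) ` ?C"
    then obtain j where j: "j < (n - 1) div M" "\<forall>k\<le>M. lbl1 (r (tt M j + k)) = None" and i: "i = j*M"
      by blast
    have "Suc j * M \<le> n - 1" using j(1) less_eq_div_iff_mult_less_eq[OF Mpos, of "Suc j" "n-1"] by simp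
    then have jb: "j * M + M \<le> n" by simp
    then have Yt: "Yc (tt M j) = j*M" using tt_prop[of j M N] unfolding n_def by simp
    have cw: "stay delta (Esc delta A) (src (r (tt M j))) (map (\<lambda>k. y (j*M+k)) [0..<M]) \<and>
         set (map (\<lambda>k. y (j*M+k)) [0..<M]) \<subseteq> A" by (rule clean_word[OF Yt j(2)])
    have "src (r (tt M j)) \<in> Esc delta A" using escE j(2) by (metis add_0_right le0)
    then have "map (\<lambda>k. y (j*M+k)) [0..<M] \<in> B" using Bst cw by auto
    then show "i \<in> ?U" using jb i by auto
  qed
  have finU: "finite ?U" by (rule finite_subset[of _ "{..n}"]) auto
  have "card ?C = card ((\<lambda>j. j*M) ` ?C)" using inj by (simp add: card_image)
  also have "\<dots> \<le> card ?U" by (intro card_mono finU sub)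
  also have "\<dots> \<le> (\<Sum>u\<in>B. card {i. i + M \<le> n \<and> i mod M = 0 \<and> map (\<lambda>k. y (i+k)) [0..<M] = u})"
    by (rule card_UN_le[OF finB])
  also have "\<dots> = (\<Sum>u\<in>B. aligned_occ y u n)"
    by (rule sum.cong) (use Bprop in \<open>auto simp: aligned_occ_def\<close>)
  finally show ?thesis unfolding n_def .
qed

lemma dirty_count:
  assumes M1: "M \<ge> 1"
  shows "card {j. j < (Yc N - 1) div M \<and> \<not> (\<forall>k\<le>M. lbl1 (r (tt M j + k)) = None)} \<le> 2 * Xc N"
proof -
  define n where "n = Yc N"
  let ?D = "{j. j < (n - 1) div M \<and> \<not> (\<forall>k\<le>M. lbl1 (r (tt M j + k)) = None)}"
  define k0 where "k0 j = (LEAST k. k \<le> M \<and> lbl1 (r (tt M j + k)) \<noteq> None)" for j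
  define f where "f j = tt M j + k0 j" for j
  have Mpos: "M > 0" using M1 by simp
  have props: "k0 j \<le> M \<and> lbl1 (r (f j)) \<noteq> None \<and> Yc (f j) = j*M + k0 j \<and> f j < N" if jD: "j \<in> ?D" for j
  proof -
    from jD obtain k where k: "k \<le> M" "lbl1 (r (tt M j + k)) \<noteq> None" by auto
    have L: "k0 j \<le> M \<and> lbl1 (r (tt M j + k0 j)) \<noteq> None"
      unfolding k0_def by (rule LeastI[of _ k]) (use k in auto)
    have bel: "\<forall>k'<k0 j. lbl1 (r (tt M j + k')) = None"
    proof (intro allI impI)
      fix k' assume "k' < k0 j"
      then have "\<not> (k' \<le> M \<and> lbl1 (r (tt M j + k')) \<noteq> None)"
        unfolding k0_def by (rule not_less_Least)
      then show "lbl1 (r (tt M j + k')) = None" using \<open>k' < k0 j\<close> L by auto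
    qed
    have "Suc j * M \<le> n - 1" using jD less_eq_div_iff_mult_less_eq[OF Mpos, of "Suc j" "n-1"] by simp
    then have jb: "j * M + M < n" using Mpos by simp
    then have Yt: "Yc (tt M j) = j*M" using tt_prop[of j M N] unfolding n_def by simp
    have Yf: "Yc (f j) = j*M + k0 j" unfolding f_def by (rule Y_run[OF Yt bel])
    have "f j < N"
    proof (rule ccontr)
      assume "\<not> f j < N"
      then have "Yc N \<le> Yc (f j)" by (intro Y_mono) simp
      then show False using Yf jb L unfolding n_def by simp
    qed
    then show ?thesis using L Yf unfolding f_def by simp
  qed
  let ?g = "\<lambda>j. (f j, k0 j = M)"
  have inj: "inj_on ?g ?D"
  proof (rule inj_onI)
    fix j j' assume j: "j \<in> ?D" and j': "j' \<in> ?D" and eq: "?g j = ?g j'"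
    have e: "j*M + k0 j = j'*M + k0 j'" using props[OF j] props[OF j'] eq by simp
    show "j = j'"
    proof (cases "k0 j = M")
      case True
      then have "k0 j' = M" using eq by simp
      then show ?thesis using e True Mpos by simp
    next
      case False
      then have a: "k0 j < M" "k0 j' < M" using eq props[OF j] props[OF j'] by auto
      have "j = (j*M + k0 j) div M" using a(1) Mpos by simp
      also have "\<dots> = (j'*M + k0 j') div M" by (simp only: e)
      also have "\<dots> = j'" using a(2) Mpos by simp
      finally show ?thesis .
    qed
  qed
  have sub: "?g ` ?D \<subseteq> {i. i < N \<and> lbl1 (r i) \<noteq> None} \<times> UNIV" using props by auto
  have "card ?D = card (?g ` ?D)" using inj by (simp add: card_image)
  also have "\<dots> \<le> card ({i. i < N \<and> lbl1 (r i) \<noteq> None} \<times> (UNIV :: bool set))"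
    by (intro card_mono sub) auto
  also have "\<dots> = card {i. i < N \<and> lbl1 (r i) \<noteq> None} * 2" by (simp add: card_cartesian_product)
  also have "\<dots> = 2 * Xc N" by (simp add: len_prefix_card)
  finally show ?thesis unfolding n_def .
qed

end



context arun begin

lemma run_bound:
  assumes M1: "M \<ge> 1" and finB: "finite B" and Bprop: "\<forall>u\<in>B. length u = M \<and> set u \<subseteq> A"
    and Bst: "\<forall>s\<in>Esc delta A. \<forall>w. length w = M \<and> set w \<subseteq> A \<and> stay delta (Esc delta A) s w \<longrightarrow> w \<in> B"
    and lt: "real (card B) / real (card A) ^ M < 1/2"
    and nrm: "normal A y"
  shows "\<exists>N. \<forall>n. N \<le> Xc n \<longrightarrow> real (Yc n) \<le> (6 * real M) * real (Xc n)"
proof -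
  have lim: "(\<lambda>n. real (aligned_occ y u n) / (real n / real M)) \<longlonglongrightarrow> 1 / real (card A) ^ M"
    if "u \<in> B" for u
    using nrm M1 Bprop that unfolding normal_def by blast
  have "(\<lambda>n. \<Sum>u\<in>B. real (aligned_occ y u n) / (real n / real M)) \<longlonglongrightarrow> (\<Sum>u\<in>B. 1 / real (card A) ^ M)"
    by (rule tendsto_sum) (rule lim)
  moreover have "(\<Sum>u\<in>B. 1 / real (card A) ^ M) = real (card B) / real (card A) ^ M" by simp
  ultimately have "eventually (\<lambda>n. (\<Sum>u\<in>B. real (aligned_occ y u n) / (real n / real M)) < 1/2) sequentially"
    using lt by (intro order_tendstoD(2)) auto
  then obtain N0 where N0: "\<And>n. n \<ge> N0 \<Longrightarrow> (\<Sum>u\<in>B. real (aligned_occ y u n) / (real n / real M)) < 1/2"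
    unfolding eventually_sequentially by blast
  define N1 where "N1 = Suc N0"
  have "\<forall>N. N1 \<le> Xc N \<longrightarrow> real (Yc N) \<le> (6 * real M) * real (Xc N)"
  proof (intro allI impI)
    fix N assume XN: "N1 \<le> Xc N"
    define n where "n = Yc N"
    define X where "X = Xc N"
    have X1: "real X \<ge> 1" using XN unfolding X_def N1_def by simp
    have Mr: "real M \<ge> 1" using M1 by simp
    show "real (Yc N) \<le> (6 * real M) * real (Xc N)"
    proof (cases "n < N1")
      case True
      then have "real n \<le> real X" using XN unfolding X_def by simp
      also have "\<dots> \<le> (6 * real M) * real X" using Mr X1 by (simp add: mult_le_cancel_right1 )
      finally show ?thesis unfolding n_def X_def .
    next
      case False
      then have nN0: "n \<ge> N0" and npos: "n > 0" unfolding N1_def by auto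
      define S where "S = (\<Sum>u\<in>B. aligned_occ y u n)"
      have "(\<Sum>u\<in>B. real (aligned_occ y u n) / (real n / real M)) = real S * real M / real n"
        unfolding S_def by (simp add: of_nat_sum sum_divide_distrib sum_distrib_right)
      then have "real S * real M / real n < 1/2" using N0[OF nN0] by simp
      then have S2: "2 * (real M * real S) < real n" using npos by (simp add: field_simps)
      define w where "w = (n - 1) div M"
      define P where "P j = (\<forall>k\<le>M. lbl1 (r (tt M j + k)) = None)" for j
      have cC: "card {j. j < w \<and> P j} \<le> S"
        using clean_count[OF M1 finB Bprop Bst, of N] unfolding S_def w_def P_def n_def by simp
      have cD: "card {j. j < w \<and> \<not> P j} \<le> 2 * X"
        using dirty_count[OF M1, of N] unfolding X_def w_def P_def n_def by simp
      have "w = card {j. j < w}" by simp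
      also have "{j. j < w} = {j. j < w \<and> P j} \<union> {j. j < w \<and> \<not> P j}" by auto
      also have "card \<dots> = card {j. j < w \<and> P j} + card {j. j < w \<and> \<not> P j}"
        by (rule card_Un_disjoint) auto
      finally have "w \<le> S + 2 * X" using cC cD by simp
      then have wr: "real w \<le> real S + 2 * real X" by linarith
      have "(n - 1) div M < Suc w" unfolding w_def by simp
      then have "n - 1 < Suc w * M" using div_less_iff_less_mult[of M "n-1" "Suc w"] M1 by simp
      then have "n \<le> Suc w * M" by simp
      then have nw: "real n \<le> real M * real w + real M" by (simp add: algebra_simps flip: of_nat_mult of_nat_add)
      have "real M * real w \<le> real M * (real S + 2 * real X)" using wr by (intro mult_left_mono) auto
      then have "real M * real w \<le> real M * real S + 2 * (real M * real X)" by (simp add: algebra_simps)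
      moreover have "real M \<le> real M * real X" using X1 Mr by simp
      ultimately have "real n \<le> 6 * (real M * real X)" using nw S2 by linarith
      then show ?thesis unfolding n_def X_def by (simp add: algebra_simps)
    qed
  qed
  then show ?thesis by blast
qed

end

theorem lemma18:
  fixes Q :: "'q set" and A :: "'a set" and delta :: "('q, 'a) trans set" and q0 :: 'q
  assumes "two_det_3aut Q A delta q0"
  shows "\<exists>K::real. \<forall>x y z r.
           accepting_run delta q0 r \<and> run_label lbl1 r x \<and> run_label lbl2 r y \<and>
           run_label lbl3 r z \<and> normal A y \<longrightarrow>
           (\<exists>N. \<forall>n. N \<le> length (prefix_label lbl1 r n) \<longrightarrow>
              real (length (prefix_label lbl2 r n)) \<le> K * real (length (prefix_label lbl1 r n)))"
proof -
  interpret tda Q A delta q0 using assms by (unfold_locales)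
  show ?thesis
  proof (cases "A = {}")
    case True
    have "\<not> accepting_run delta q0 r" for r
    proof
      assume acc: "accepting_run delta q0 r"
      then have r0: "r 0 \<in> delta" unfolding accepting_run_def by blast
      show False
      proof (cases "lbl1 (r 0)")
        case None
        then obtain a where "lbl2 (r 0) = Some a" using l1l2[OF r0] by blast
        then show False using lab2A[OF r0] True by blast
      next
        case (Some a)
        then show False using lab1A[OF r0] True by blast
      qed
    qed
    then show ?thesis by blast
  next
    case False
    obtain M B where MB: "M \<ge> 1" "finite B" "\<forall>u\<in>B. length u = M \<and> set u \<subseteq> A"
      "real (card B) / real (card A) ^ M < 1/2"
      "\<forall>s\<in>Esc delta A. \<forall>w. length w = M \<and> set w \<subseteq> A \<and> stay delta (Esc delta A) s w \<longrightarrow> w \<in> B"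
      using choose_MB[OF False] by blast
    show ?thesis
    proof (rule exI[of _ "6 * real M"], intro allI impI)
      fix x y z r
      assume H: "accepting_run delta q0 r \<and> run_label lbl1 r x \<and> run_label lbl2 r y \<and>
           run_label lbl3 r z \<and> normal A y"
      interpret arun Q A delta q0 r y
        by (intro arun.intro arun_axioms.intro tda_axioms) (use H in auto)
      show "\<exists>N. \<forall>n. N \<le> length (prefix_label lbl1 r n) \<longrightarrow>
              real (length (prefix_label lbl2 r n)) \<le> (6 * real M) * real (length (prefix_label lbl1 r n))"
        using run_bound[OF MB(1,2,3,5,4)] H by blast
    qed
  qed
qed


end
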